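(* Let $d\ge1$, $N_1,\ldots,N_d\ge1$, and $p_j,q_j:\{0,\ldots,N_j\}\to[0,1]$ with $p_j(0)=q_j(0)=p_j(N_j)=q_j(N_j)=0$ and $\sum_k(p_k(i_k)+q_k(i_k))\le1$ on $\mathbb E=\{1,\ldots,N_1\}\times\cdots\times\{1,\ldots,N_d\}$. Let $\mathbf P_Z$ be the substochastic matrix on $\mathbb E$ with $\mathbf P_Z(\mathbf i,\mathbf i+\mathbf s_j)=p_j(i_j)$, $\mathbf P_Z(\mathbf i,\mathbf i-\mathbf s_j)=q_j(i_j)$ (when $\mathbf i\pm\mathbf s_j\in\mathbb E$), $\mathbf P_Z(\mathbf i,\mathbf i)=1-\sum_{k=1}^d(p_k(i_k)+q_k(i_k))$, and $0$ otherwise. Let $\preceq$ be the coordinatewise order on $\mathbb E$, $\mathbf C(\mathbf i,\mathbf i')=\mathbf 1(\mathbf i\preceq\mathbf i')$. Then $\mathbf P_X:=\mathbf C\mathbf P_Z^T\mathbf C^{-1}$ is given by $\mathbf P_X(\mathbf i,\mathbf i+\mathbf s_j)=q_j(i_j)$ (for $i_j<N_j$), $\mathbf P_X(\mathbf i,\mathbf i-\mathbf s_j)=p_j(i_j-1)$ (for $i_j>1$), $\mathbf P_X(\mathbf i,\mathbf i)=1-\sum_{k=1}^d\big(p_k(i_k-1)+q_k(i_k)\big)$, and $\mathbf P_X(\mathbf i,\mathbf i')=0$ for all other $\mathbf i'$.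
   Context: $\mathbf i=(i_1,\ldots,i_d)$, $\mathbf s_j$ is the $j$-th unit vector, $\mathbf i\preceq\mathbf i'$ iff $i_j\le i'_j$ for all $j$. *)

theory Defs
  imports Complex_Main
begin

text \<open>Points of the grid E = {1..N_0} x ... x {1..N_(d-1)} are encoded as functions
  nat => nat that vanish at coordinates j >= d (coordinates are indexed 0..d-1).\<close>

definition grid :: "nat \<Rightarrow> (nat \<Rightarrow> nat) \<Rightarrow> (nat \<Rightarrow> nat) set" where
  "grid d N = {i. (\<forall>j<d. 1 \<le> i j \<and> i j \<le> N j) \<and> (\<forall>j. d \<le> j \<longrightarrow> i j = 0)}"

definition mmult :: "'a set \<Rightarrow> ('a \<Rightarrow> 'a \<Rightarrow> real) \<Rightarrow> ('a \<Rightarrow> 'a \<Rightarrow> real) \<Rightarrow> 'a \<Rightarrow> 'a \<Rightarrow> real" where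
  "mmult S A B = (\<lambda>x y. \<Sum>z\<in>S. A x z * B z y)"

definition mtrans :: "('a \<Rightarrow> 'a \<Rightarrow> real) \<Rightarrow> 'a \<Rightarrow> 'a \<Rightarrow> real" where
  "mtrans A = (\<lambda>x y. A y x)"

definition mident :: "'a \<Rightarrow> 'a \<Rightarrow> real" where
  "mident = (\<lambda>x y. if x = y then 1 else 0)"

definition minv :: "'a set \<Rightarrow> ('a \<Rightarrow> 'a \<Rightarrow> real) \<Rightarrow> 'a \<Rightarrow> 'a \<Rightarrow> real" where
  "minv S A = (THE B. (\<forall>x\<in>S. \<forall>y\<in>S. mmult S A B x y = mident x y)
                    \<and> (\<forall>x\<in>S. \<forall>y\<in>S. mmult S B A x y = mident x y)
                    \<and> (\<forall>x y. x \<notin> S \<or> y \<notin> S \<longrightarrow> B x y = 0))"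

text \<open>The substochastic matrix P_Z (evaluated on E x E).\<close>
definition PZ :: "nat \<Rightarrow> (nat \<Rightarrow> nat \<Rightarrow> real) \<Rightarrow> (nat \<Rightarrow> nat \<Rightarrow> real)
                   \<Rightarrow> (nat \<Rightarrow> nat) \<Rightarrow> (nat \<Rightarrow> nat) \<Rightarrow> real" where
  "PZ d p q i i' =
     (if i' = i then 1 - (\<Sum>k<d. p k (i k) + q k (i k))
      else (\<Sum>j<d. (if i' = i(j := i j + 1) then p j (i j) else 0)
                 + (if i' = i(j := i j - 1) then q j (i j) else 0)))"

definition Cmat :: "nat \<Rightarrow> (nat \<Rightarrow> nat) \<Rightarrow> (nat \<Rightarrow> nat) \<Rightarrow> real" where
  "Cmat d i i' = (if \<forall>j<d. i j \<le> i' j then 1 else 0)"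

end

theory Submission
  imports Defs "HOL-Library.FuncSet"
begin


lemma grid_finite: "finite (grid d N)"
proof -
  have "grid d N \<subseteq> {f. \<forall>x. (x \<in> {..<d} \<longrightarrow> f x \<in> {0..sum N {..<d}}) \<and> (x \<notin> {..<d} \<longrightarrow> f x = 0)}"
    unfolding grid_def
    by (auto intro: order_trans[OF _ member_le_sum])
  then show ?thesis by (rule finite_subset) (rule finite_set_of_finite_funs, auto)
qed

lemma grid_prod_sum:
  fixes f :: "nat \<Rightarrow> nat \<Rightarrow> real"
  shows "(\<Sum>k\<in>grid d N. \<Prod>j<d. f j (k j)) = (\<Prod>j<d. \<Sum>x\<in>{1..N j}. f j x)"
proof -
  define ext where "ext = (\<lambda>g::nat\<Rightarrow>nat. \<lambda>j. if j < d then g j else 0)"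
  have img: "grid d N = ext ` PiE {..<d} (\<lambda>j. {1..N j})"
  proof
    show "grid d N \<subseteq> ext ` PiE {..<d} (\<lambda>j. {1..N j})"
    proof
      fix k assume k: "k \<in> grid d N"
      have "restrict k {..<d} \<in> PiE {..<d} (\<lambda>j. {1..N j})" using k by (auto simp: grid_def)
      moreover have "k = ext (restrict k {..<d})" using k by (auto simp: grid_def ext_def)
      ultimately show "k \<in> ext ` PiE {..<d} (\<lambda>j. {1..N j})" by blast
    qed
    show "ext ` PiE {..<d} (\<lambda>j. {1..N j}) \<subseteq> grid d N"
      by (auto simp: grid_def ext_def PiE_def Pi_def)
  qed
  have inj: "inj_on ext (PiE {..<d} (\<lambda>j. {1..N j}))"
  proof (rule inj_onI)
    fix g h assume g: "g \<in> PiE {..<d} (\<lambda>j. {1..N j})" and h: "h \<in> PiE {..<d} (\<lambda>j. {1..N j})"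
      and e: "ext g = ext h"
    show "g = h"
    proof
      fix j show "g j = h j"
      proof (cases "j < d")
        case True then show ?thesis using fun_cong[OF e, of j] by (simp add: ext_def)
      next
        case False then show ?thesis using g h by (auto simp: PiE_def extensional_def)
      qed
    qed
  qed
  have "(\<Sum>k\<in>grid d N. \<Prod>j<d. f j (k j)) = (\<Sum>g\<in>PiE {..<d} (\<lambda>j. {1..N j}). \<Prod>j<d. f j (ext g j))"
    unfolding img by (rule sum.reindex[OF inj, unfolded comp_def])
  also have "\<dots> = (\<Sum>g\<in>PiE {..<d} (\<lambda>j. {1..N j}). \<Prod>j<d. f j (g j))"
    by (intro sum.cong prod.cong) (auto simp: ext_def)
  also have "\<dots> = (\<Prod>j<d. \<Sum>x\<in>{1..N j}. f j x)"
    by (rule prod_sum_PiE[symmetric]) auto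
  finally show ?thesis .
qed

lemma mmult_assoc:
  assumes "finite S"
  shows "mmult S A (mmult S B C) = mmult S (mmult S A B) C"
  unfolding mmult_def
  by (simp add: sum_distrib_left sum_distrib_right mult.assoc) (rule ext, rule ext, rule sum.swap)



definition mu :: "nat \<Rightarrow> nat \<Rightarrow> real" where
  "mu a b = (if b = a then 1 else 0) - (if b = Suc a then 1 else 0)"

definition Mi :: "nat \<Rightarrow> (nat \<Rightarrow> nat) \<Rightarrow> (nat \<Rightarrow> nat) \<Rightarrow> (nat \<Rightarrow> nat) \<Rightarrow> real" where
  "Mi d N k i' = (if k \<in> grid d N \<and> i' \<in> grid d N then \<Prod>j<d. mu (k j) (i' j) else 0)"

lemma ind_prod: "(if \<forall>j<(d::nat). P j then 1 else 0) = (\<Prod>j<d. if P j then 1 else (0::real))"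
  by (induction d) (auto simp: less_Suc_eq)

lemma Cmat_prod: "Cmat d i k = (\<Prod>j<d. if i j \<le> k j then 1 else 0)"
  unfolding Cmat_def by (rule ind_prod)

lemma mu1:
  assumes "1 \<le> a" "a \<le> n" "1 \<le> b" "b \<le> n"
  shows "(\<Sum>x\<in>{1..n}. (if a \<le> x then 1 else 0) * mu x b) = (if a = b then 1 else 0)"
proof -
  have "(\<Sum>x\<in>{1..n}. (if a \<le> x then 1 else 0) * mu x b)
     = (\<Sum>x\<in>{1..n}. (if x = b then (if a \<le> x then 1 else 0) else 0))
       - (\<Sum>x\<in>{1..n}. (if x = b - 1 \<and> 0 < b then (if a \<le> x then 1 else 0) else (0::real)))"
    unfolding sum_subtractf[symmetric] by (rule sum.cong) (auto simp: mu_def)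
  also have "\<dots> = (if a = b then 1 else 0)"
    using assms by (simp add: sum.delta'; arith)
  finally show ?thesis .
qed

lemma mu2:
  assumes "1 \<le> a" "a \<le> n" "1 \<le> b" "b \<le> n"
  shows "(\<Sum>x\<in>{1..n}. mu a x * (if x \<le> b then 1 else 0)) = (if a = b then 1 else 0)"
proof -
  have "(\<Sum>x\<in>{1..n}. mu a x * (if x \<le> b then 1 else 0))
     = (\<Sum>x\<in>{1..n}. (if x = a then (if x \<le> b then 1 else 0) else 0))
       - (\<Sum>x\<in>{1..n}. (if x = Suc a then (if x \<le> b then 1 else 0) else (0::real)))"
    unfolding sum_subtractf[symmetric] by (rule sum.cong) (auto simp: mu_def)
  also have "\<dots> = (if a = b then 1 else 0)"
    using assms by (simp add: sum.delta')
  finally show ?thesis .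
qed

lemma grid_eq:
  assumes "i \<in> grid d N" "i' \<in> grid d N"
  shows "(\<Prod>j<d. if i j = i' j then 1 else (0::real)) = mident i i'"
proof -
  have "(i = i') = (\<forall>j<d. i j = i' j)"
  proof
    assume "\<forall>j<d. i j = i' j"
    then show "i = i'" using assms by (intro ext) (auto simp: grid_def, metis not_le)
  qed simp
  then show ?thesis unfolding mident_def ind_prod[symmetric] by simp
qed

lemma CM:
  assumes "i \<in> grid d N" "i' \<in> grid d N"
  shows "mmult (grid d N) (Cmat d) (Mi d N) i i' = mident i i'"
proof -
  have "mmult (grid d N) (Cmat d) (Mi d N) i i'
     = (\<Sum>k\<in>grid d N. \<Prod>j<d. (if i j \<le> k j then 1 else 0) * mu (k j) (i' j))"
    unfolding mmult_def Cmat_prod Mi_def using assms by (auto simp: prod.distrib intro!: sum.cong)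
  also have "\<dots> = (\<Prod>j<d. \<Sum>x\<in>{1..N j}. (if i j \<le> x then 1 else 0) * mu x (i' j))"
    by (rule grid_prod_sum)
  also have "\<dots> = (\<Prod>j<d. if i j = i' j then 1 else 0)"
    using assms by (intro prod.cong refl mu1) (auto simp: grid_def)
  finally show ?thesis using grid_eq[OF assms] by simp
qed

lemma MC:
  assumes "i \<in> grid d N" "i' \<in> grid d N"
  shows "mmult (grid d N) (Mi d N) (Cmat d) i i' = mident i i'"
proof -
  have "mmult (grid d N) (Mi d N) (Cmat d) i i'
     = (\<Sum>k\<in>grid d N. \<Prod>j<d. mu (i j) (k j) * (if k j \<le> i' j then 1 else 0))"
    unfolding mmult_def Cmat_prod Mi_def using assms by (auto simp: prod.distrib intro!: sum.cong)
  also have "\<dots> = (\<Prod>j<d. \<Sum>x\<in>{1..N j}. mu (i j) x * (if x \<le> i' j then 1 else 0))"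
    by (rule grid_prod_sum)
  also have "\<dots> = (\<Prod>j<d. if i j = i' j then 1 else 0)"
    using assms by (intro prod.cong refl mu2) (auto simp: grid_def)
  finally show ?thesis using grid_eq[OF assms] by simp
qed

lemma minv_C: "minv (grid d N) (Cmat d) = Mi d N"
  unfolding minv_def
proof (rule the_equality)
  let ?S = "grid d N"
  show "(\<forall>x\<in>?S. \<forall>y\<in>?S. mmult ?S (Cmat d) (Mi d N) x y = mident x y) \<and>
    (\<forall>x\<in>?S. \<forall>y\<in>?S. mmult ?S (Mi d N) (Cmat d) x y = mident x y) \<and>
    (\<forall>x y. x \<notin> ?S \<or> y \<notin> ?S \<longrightarrow> Mi d N x y = 0)"
    using CM MC by (auto simp: Mi_def)
  fix B assume B: "(\<forall>x\<in>?S. \<forall>y\<in>?S. mmult ?S (Cmat d) B x y = mident x y) \<and>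
    (\<forall>x\<in>?S. \<forall>y\<in>?S. mmult ?S B (Cmat d) x y = mident x y) \<and>
    (\<forall>x y. x \<notin> ?S \<or> y \<notin> ?S \<longrightarrow> B x y = 0)"
  show "B = Mi d N"
  proof (intro ext)
    fix x y
    show "B x y = Mi d N x y"
    proof (cases "x \<in> ?S \<and> y \<in> ?S")
      case False then show ?thesis using B by (auto simp: Mi_def)
    next
      case True
      have "B x y = (\<Sum>z\<in>?S. B x z * mident z y)"
        using True by (simp add: mident_def if_distrib sum.delta sum.delta' grid_finite cong: if_cong)
      also have "\<dots> = mmult ?S B (mmult ?S (Cmat d) (Mi d N)) x y"
        unfolding mmult_def[of ?S B] using True CM by (intro sum.cong) auto
      also have "\<dots> = mmult ?S (mmult ?S B (Cmat d)) (Mi d N) x y"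
        by (simp add: mmult_assoc grid_finite)
      also have "\<dots> = (\<Sum>z\<in>?S. mident x z * Mi d N z y)"
        unfolding mmult_def[of ?S _ "Mi d N"] using True B by (intro sum.cong) auto
      also have "\<dots> = (\<Sum>z\<in>?S. if x = z then Mi d N z y else 0)"
        by (intro sum.cong) (auto simp: mident_def)
      also have "\<dots> = Mi d N x y"
        using True by (simp add: grid_finite)
      finally show ?thesis .
    qed
  qed
qed



lemma grid_plus: "i \<in> grid d N \<Longrightarrow> j < d \<Longrightarrow> (i(j := i j + 1) \<in> grid d N) = (i j < N j)"
  unfolding grid_def by (auto simp: fun_upd_apply)

lemma grid_minus: "i \<in> grid d N \<Longrightarrow> j < d \<Longrightarrow> (i(j := i j - 1) \<in> grid d N) = (1 < i j)"
  unfolding grid_def by (auto simp: fun_upd_apply)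

lemma grid_plus': "i \<in> grid d N \<Longrightarrow> j < d \<Longrightarrow> (i(j := Suc (i j)) \<in> grid d N) = (i j < N j)"
  using grid_plus by simp
lemma grid_minus': "i \<in> grid d N \<Longrightarrow> j < d \<Longrightarrow> (i(j := i j - Suc 0) \<in> grid d N) = (Suc 0 < i j)"
  using grid_minus by simp

lemma upd_neq: "v \<noteq> f j \<Longrightarrow> f \<noteq> f(j := v)"
  by (metis fun_upd_same)

lemma expand_sum:
  fixes g :: "(nat \<Rightarrow> nat) \<Rightarrow> real"
  assumes "finite S"
  shows "(\<Sum>k\<in>S. g k * ((if k = a then c else 0) + (\<Sum>j<d. (if P1 j \<and> k = f1 j then c1 j else 0) + (if P2 j \<and> k = f2 j then c2 j else 0))))
    = (if a \<in> S then g a * c else 0) + (\<Sum>j<d. (if P1 j \<and> f1 j \<in> S then g (f1 j) * c1 j else 0) + (if P2 j \<and> f2 j \<in> S then g (f2 j) * c2 j else 0))"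
proof -
  have d: "\<And>b e. (\<Sum>k\<in>S. g k * (if k = b then e else 0)) = (if b \<in> S then g b * e else 0)"
  proof -
    fix b e
    have "(\<Sum>k\<in>S. g k * (if k = b then e else 0)) = (\<Sum>k\<in>S. if k = b then g b * e else 0)"
      by (intro sum.cong) auto
    then show "(\<Sum>k\<in>S. g k * (if k = b then e else 0)) = (if b \<in> S then g b * e else 0)"
      using assms by simp
  qed
  have d2: "\<And>P b e. (\<Sum>k\<in>S. g k * (if P \<and> k = b then e else 0)) = (if P \<and> b \<in> S then g b * e else 0)"
    subgoal for P b e using d[of b e] by (cases P) auto done
  have "(\<Sum>k\<in>S. g k * ((if k = a then c else 0) + (\<Sum>j<d. (if P1 j \<and> k = f1 j then c1 j else 0) + (if P2 j \<and> k = f2 j then c2 j else 0))))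
     = (\<Sum>k\<in>S. g k * (if k = a then c else 0)) + (\<Sum>j<d. (\<Sum>k\<in>S. g k * (if P1 j \<and> k = f1 j then c1 j else 0)) + (\<Sum>k\<in>S. g k * (if P2 j \<and> k = f2 j then c2 j else 0)))"
    by (simp add: distrib_left sum.distrib sum_distrib_left sum.swap[of _ S])
  also have "\<dots> = (if a \<in> S then g a * c else 0) + (\<Sum>j<d. (if P1 j \<and> f1 j \<in> S then g (f1 j) * c1 j else 0) + (if P2 j \<and> f2 j \<in> S then g (f2 j) * c2 j else 0))"
    by (simp only: d d2)
  finally show ?thesis .
qed

lemma PZ_expand:
  assumes "i' \<in> grid d N"
  shows "PZ d p q i' k = (if k = i' then 1 - (\<Sum>l<d. p l (i' l) + q l (i' l)) else 0)
     + (\<Sum>j<d. (if True \<and> k = i'(j := i' j + 1) then p j (i' j) else 0) + (if True \<and> k = i'(j := i' j - 1) then q j (i' j) else 0))"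
proof (cases "k = i'")
  case True
  have "\<forall>j<d. i' \<noteq> i'(j := i' j + 1) \<and> i' \<noteq> i'(j := i' j - 1)"
    using assms by (auto simp: grid_def intro!: upd_neq)
  then show ?thesis using True by (simp add: PZ_def)
qed (simp add: PZ_def)

definition PXf :: "nat \<Rightarrow> (nat \<Rightarrow> nat) \<Rightarrow> (nat \<Rightarrow> nat \<Rightarrow> real) \<Rightarrow> (nat \<Rightarrow> nat \<Rightarrow> real) \<Rightarrow> (nat \<Rightarrow> nat) \<Rightarrow> (nat \<Rightarrow> nat) \<Rightarrow> real" where
  "PXf d N p q i i' = (if i' = i then 1 - (\<Sum>k<d. p k (i k - 1) + q k (i k))
      else (\<Sum>j<d. (if i j < N j \<and> i' = i(j := i j + 1) then q j (i j) else 0)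
                 + (if 1 < i j \<and> i' = i(j := i j - 1) then p j (i j - 1) else 0)))"

lemma PX_expand:
  assumes "i \<in> grid d N"
  shows "PXf d N p q i k = (if k = i then 1 - (\<Sum>l<d. p l (i l - 1) + q l (i l)) else 0)
     + (\<Sum>j<d. (if i j < N j \<and> k = i(j := i j + 1) then q j (i j) else 0) + (if 1 < i j \<and> k = i(j := i j - 1) then p j (i j - 1) else 0))"
proof (cases "k = i")
  case True
  have "\<forall>j<d. i \<noteq> i(j := i j + 1) \<and> i \<noteq> i(j := i j - 1)"
    using assms by (auto simp: grid_def intro!: upd_neq)
  then show ?thesis using True by (simp add: PXf_def)
qed (simp add: PXf_def)

lemma Cmat_split: "j < d \<Longrightarrow> Cmat d u v = (if (\<forall>l<d. l \<noteq> j \<longrightarrow> u l \<le> v l) \<and> u j \<le> v j then 1 else 0)"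
  unfolding Cmat_def by (metis)

lemma onedim:
  fixes pp qq :: "nat \<Rightarrow> real"
  assumes "1 \<le> a" "a \<le> n" "1 \<le> b" "b \<le> n" "pp 0 = 0" "pp n = 0"
  shows "- (if E \<and> a \<le> b then 1 else 0) * (pp (a - 1) + qq a)
     + (if a < n then (if E \<and> a + 1 \<le> b then 1 else 0) * qq a else 0)
     + (if 1 < a then (if E \<and> a - 1 \<le> b then 1 else 0) * pp (a - 1) else 0)
   = - (if E \<and> a \<le> b then 1 else 0) * (pp b + qq b)
     + (if b < n then (if E \<and> a \<le> b + 1 then 1 else 0) * pp b else 0)
     + (if 1 < b then (if E \<and> a \<le> b - 1 then 1 else 0) * qq b else 0)"
  using assms
  by (cases E; cases "a = b"; cases "a = b + 1"; cases "a < b"; auto)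

lemma core:
  assumes i: "i \<in> grid d N" and i': "i' \<in> grid d N"
    and p0: "\<forall>j<d. p j 0 = 0 \<and> p j (N j) = 0"
  shows "mmult (grid d N) (Cmat d) (mtrans (PZ d p q)) i i' = mmult (grid d N) (PXf d N p q) (Cmat d) i i'"
proof -
  let ?S = "grid d N"
  let ?C = "Cmat d i i'"
  define Z where "Z j = (if i' j < N j then Cmat d i (i'(j:=i' j+1)) * p j (i' j) else 0) + (if 1 < i' j then Cmat d i (i'(j:=i' j - 1)) * q j (i' j) else 0)" for j
  define X where "X j = (if i j < N j then Cmat d (i(j:=i j+1)) i' * q j (i j) else 0) + (if 1 < i j then Cmat d (i(j:= i j - 1)) i' * p j (i j - 1) else 0)" for j
  have L: "mmult ?S (Cmat d) (mtrans (PZ d p q)) i i' = ?C * (1 - (\<Sum>l<d. p l (i' l) + q l (i' l))) + (\<Sum>j<d. Z j)"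
  proof -
    have "mmult ?S (Cmat d) (mtrans (PZ d p q)) i i' = (\<Sum>k\<in>?S. Cmat d i k * PZ d p q i' k)"
      by (simp add: mmult_def mtrans_def)
    also have "\<dots> = ?C * (1 - (\<Sum>l<d. p l (i' l) + q l (i' l))) + (\<Sum>j<d. (if True \<and> i'(j := i' j + 1) \<in> ?S then Cmat d i (i'(j := i' j + 1)) * p j (i' j) else 0) + (if True \<and> i'(j := i' j - 1) \<in> ?S then Cmat d i (i'(j := i' j - 1)) * q j (i' j) else 0))"
      unfolding PZ_expand[OF i'] by (subst expand_sum[OF grid_finite]) (simp add: i')
    also have "\<dots> = ?C * (1 - (\<Sum>l<d. p l (i' l) + q l (i' l))) + (\<Sum>j<d. Z j)"
      by (intro arg_cong2[where f="(+)"] refl sum.cong) (simp add: Z_def grid_plus[OF i'] grid_minus[OF i'] grid_plus'[OF i'] grid_minus'[OF i'])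
    finally show ?thesis .
  qed
  have R: "mmult ?S (PXf d N p q) (Cmat d) i i' = ?C * (1 - (\<Sum>l<d. p l (i l - 1) + q l (i l))) + (\<Sum>j<d. X j)"
  proof -
    have "mmult ?S (PXf d N p q) (Cmat d) i i' = (\<Sum>k\<in>?S. Cmat d k i' * PXf d N p q i k)"
      by (simp add: mmult_def mult.commute)
    also have "\<dots> = ?C * (1 - (\<Sum>l<d. p l (i l - 1) + q l (i l))) + (\<Sum>j<d. (if i j < N j \<and> i(j := i j + 1) \<in> ?S then Cmat d (i(j := i j + 1)) i' * q j (i j) else 0) + (if 1 < i j \<and> i(j := i j - 1) \<in> ?S then Cmat d (i(j := i j - 1)) i' * p j (i j - 1) else 0))"
      unfolding PX_expand[OF i] by (subst expand_sum[OF grid_finite]) (simp add: i)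
    also have "\<dots> = ?C * (1 - (\<Sum>l<d. p l (i l - 1) + q l (i l))) + (\<Sum>j<d. X j)"
      by (intro arg_cong2[where f="(+)"] refl sum.cong) (simp add: X_def grid_plus[OF i] grid_minus[OF i] grid_plus'[OF i] grid_minus'[OF i])
    finally show ?thesis .
  qed
  have pj: "Z j - ?C * (p j (i' j) + q j (i' j)) = X j - ?C * (p j (i j - 1) + q j (i j))" if j: "j < d" for j
  proof -
    define E where "E = (\<forall>l<d. l \<noteq> j \<longrightarrow> i l \<le> i' l)"
    have b: "1 \<le> i j" "i j \<le> N j" "1 \<le> i' j" "i' j \<le> N j" using i i' j by (auto simp: grid_def)
    have o: "- (if E \<and> i j \<le> i' j then 1 else 0) * (p j (i j - 1) + q j (i j))
     + (if i j < N j then (if E \<and> i j + 1 \<le> i' j then 1 else 0) * q j (i j) else 0)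
     + (if 1 < i j then (if E \<and> i j - 1 \<le> i' j then 1 else 0) * p j (i j - 1) else 0)
   = - (if E \<and> i j \<le> i' j then 1 else 0) * (p j (i' j) + q j (i' j))
     + (if i' j < N j then (if E \<and> i j \<le> i' j + 1 then 1 else 0) * p j (i' j) else 0)
     + (if 1 < i' j then (if E \<and> i j \<le> i' j - 1 then 1 else 0) * q j (i' j) else 0)"
      by (rule onedim[OF b]) (use p0 j in auto)
    have c1: "?C = (if E \<and> i j \<le> i' j then 1 else 0)"
      unfolding E_def by (rule Cmat_split[OF j])
    have c2: "Cmat d i (i'(j:=x)) = (if E \<and> i j \<le> x then 1 else 0)" for x
      unfolding E_def by (subst Cmat_split[OF j]) auto
    have c3: "Cmat d (i(j:=x)) i' = (if E \<and> x \<le> i' j then 1 else 0)" for x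
      unfolding E_def by (subst Cmat_split[OF j]) auto
    show ?thesis unfolding Z_def X_def c1 c2 c3 using o by linarith
  qed
  have "(\<Sum>j<d. Z j - ?C * (p j (i' j) + q j (i' j))) = (\<Sum>j<d. X j - ?C * (p j (i j - 1) + q j (i j)))"
    by (intro sum.cong refl pj) simp
  then have "(\<Sum>j<d. Z j) - ?C * (\<Sum>j<d. p j (i' j) + q j (i' j)) = (\<Sum>j<d. X j) - ?C * (\<Sum>j<d. p j (i j - 1) + q j (i j))"
    by (simp add: sum_subtractf sum_distrib_left)
  then show ?thesis unfolding L R by (simp add: algebra_simps)
qed

theorem mainTheorem4:
  fixes d :: nat and N :: "nat \<Rightarrow> nat" and p q :: "nat \<Rightarrow> nat \<Rightarrow> real"
  assumes "d \<ge> 1"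
    and "\<forall>j<d. N j \<ge> 1"
    and "\<forall>j<d. \<forall>x\<le>N j. 0 \<le> p j x \<and> p j x \<le> 1 \<and> 0 \<le> q j x \<and> q j x \<le> 1"
    and "\<forall>j<d. p j 0 = 0 \<and> q j 0 = 0 \<and> p j (N j) = 0 \<and> q j (N j) = 0"
    and "\<forall>i\<in>grid d N. (\<Sum>k<d. p k (i k) + q k (i k)) \<le> 1"
  shows "\<forall>i\<in>grid d N. \<forall>i'\<in>grid d N.
     mmult (grid d N) (mmult (grid d N) (Cmat d) (mtrans (PZ d p q))) (minv (grid d N) (Cmat d)) i i' =
     (if i' = i then 1 - (\<Sum>k<d. p k (i k - 1) + q k (i k))
      else (\<Sum>j<d. (if i j < N j \<and> i' = i(j := i j + 1) then q j (i j) else 0)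
                 + (if 1 < i j \<and> i' = i(j := i j - 1) then p j (i j - 1) else 0)))"
  proof (intro ballI)
  fix i i' assume i: "i \<in> grid d N" and i': "i' \<in> grid d N"
  let ?S = "grid d N"
  have p0: "\<forall>j<d. p j 0 = 0 \<and> p j (N j) = 0" using assms(4) by auto
  have "mmult ?S (mmult ?S (Cmat d) (mtrans (PZ d p q))) (minv ?S (Cmat d)) i i'
      = (\<Sum>z\<in>?S. mmult ?S (Cmat d) (mtrans (PZ d p q)) i z * Mi d N z i')"
    by (simp add: minv_C mmult_def)
  also have "\<dots> = (\<Sum>z\<in>?S. mmult ?S (PXf d N p q) (Cmat d) i z * Mi d N z i')"
    by (intro sum.cong refl) (simp add: core[OF i _ p0])
  also have "\<dots> = mmult ?S (mmult ?S (PXf d N p q) (Cmat d)) (Mi d N) i i'"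
    by (simp add: mmult_def)
  also have "\<dots> = mmult ?S (PXf d N p q) (mmult ?S (Cmat d) (Mi d N)) i i'"
    by (simp add: mmult_assoc grid_finite)
  also have "\<dots> = (\<Sum>z\<in>?S. if z = i' then PXf d N p q i i' else 0)"
    unfolding mmult_def[of ?S "PXf d N p q"] by (intro sum.cong refl) (auto simp: CM[OF _ i'] mident_def)
  also have "\<dots> = PXf d N p q i i'"
    using i' by (simp add: grid_finite)
  finally show "mmult ?S (mmult ?S (Cmat d) (mtrans (PZ d p q))) (minv ?S (Cmat d)) i i' =
     (if i' = i then 1 - (\<Sum>k<d. p k (i k - 1) + q k (i k))
      else (\<Sum>j<d. (if i j < N j \<and> i' = i(j := i j + 1) then q j (i j) else 0)
                 + (if 1 < i j \<and> i' = i(j := i j - 1) then p j (i j - 1) else 0)))"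
    by (simp add: PXf_def)
qed

end
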